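(* Let $N>K$ and let $\mathbf{d}_u=(d_1,\dots,d_K)$ be a demand vector with pairwise distinct entries. Let the cache configuration $\mathcal{C}$ be produced by the old placement scheme with $F$ packets per file, and let $t=KM/N$. If $$F\le \frac{N/M}{2K}\left(1-\frac{1}{N/M}\right)\exp\!\left(2t\Big(1-\frac{t}{K}\Big)\Big(1-\frac1K\Big)\right),$$ then $$\mathbb{E}\big[R^{nd}(\mathcal{C},\mathbf{d}_u)\big]\ge \frac12\Big(1-\frac{M}{N}\Big)K,$$ where the expectation is over the random placement.
   Context: Setting: a server holds a library of $N$ files, each split into $F$ packets (packet $f$ of file $n$ denoted $(n,f)$); $K$ users each have a cache holding $M$ files' worth of packets ($M\le N$). For a cache configuration, $S_{n,f}\subseteq[1:K]$ denotes the set of users whose cache stores packet $(n,f)$. User $k$ requests file $d_k$. Old placement scheme (with $MF/N$ an integer): for every user $k$ and every file $n$, a subset of $MF/N$ of the $F$ packets of file $n$ is chosen uniformly at random and stored in user $k$'s cache; all choices are mutually independent. Delivery scheme and its rate $R^{nd}$: for $k\in[1:K]$ and $T\subseteq[1:K]\setminus\{k\}$, let $V_{k,T}$ be the set of packets $f$ of file $d_k$ with $S_{d_k,f}=T$ exactly. For every nonempty $\mathcal{S}\subseteq[1:K]$ the scheme transmits the XOR of the packet vectors $V_{k,\mathcal{S}\setminus\{k\}}$, $k\in\mathcal{S}$ (shorter vectors zero-padded to the longest). Its normalized number of transmissions is $$R^{nd}(\mathcal{C},\mathbf{d})=\sum_{\emptyset\ne\mathcal{S}\subseteq[1:K]}\frac{\max_{k\in\mathcal{S}}|V_{k,\mathcal{S}\setminus\{k\}}|}{F}.$$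 *)

theory Defs
  imports "HOL-Probability.Probability_Mass_Function"
begin

text \<open>Users are indexed by {..<K}, files by {..<N}, packets by {..<F}.
  A cache configuration C maps user k and file n to the set C k n of packets
  of file n stored in the cache of user k.\<close>

definition old_placement_configs :: "nat \<Rightarrow> nat \<Rightarrow> nat \<Rightarrow> nat \<Rightarrow> (nat \<Rightarrow> nat \<Rightarrow> nat set) set" where
  "old_placement_configs K N F m =
     {C. \<forall>k n. (k < K \<and> n < N \<longrightarrow> C k n \<subseteq> {..<F} \<and> card (C k n) = m)
              \<and> (\<not> (k < K \<and> n < N) \<longrightarrow> C k n = {})}"

text \<open>Old placement scheme: independently for each user and file, a uniformly random
  m-subset of the F packets (m = MF/N). Equivalently: the uniform distribution on all
  such configurations.\<close>
definition old_placement :: "nat \<Rightarrow> nat \<Rightarrow> nat \<Rightarrow> nat \<Rightarrow> (nat \<Rightarrow> nat \<Rightarrow> nat set) pmf" where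
  "old_placement K N F m = pmf_of_set (old_placement_configs K N F m)"

definition users_storing :: "(nat \<Rightarrow> nat \<Rightarrow> nat set) \<Rightarrow> nat \<Rightarrow> nat \<Rightarrow> nat \<Rightarrow> nat set" where
  "users_storing C K n f = {k \<in> {..<K}. f \<in> C k n}"

definition Vset :: "(nat \<Rightarrow> nat \<Rightarrow> nat set) \<Rightarrow> nat \<Rightarrow> nat \<Rightarrow> (nat \<Rightarrow> nat) \<Rightarrow> nat \<Rightarrow> nat set \<Rightarrow> nat set" where
  "Vset C K F d k T = {f \<in> {..<F}. users_storing C K (d k) f = T}"

definition R_nd :: "(nat \<Rightarrow> nat \<Rightarrow> nat set) \<Rightarrow> nat \<Rightarrow> nat \<Rightarrow> (nat \<Rightarrow> nat) \<Rightarrow> real" where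
  "R_nd C K F d =
     (\<Sum>S \<in> {S. S \<subseteq> {..<K} \<and> S \<noteq> {}}.
        real (Max ((\<lambda>k. card (Vset C K F d k (S - {k}))) ` S)) / real F)"

end

theory Submission
  imports Defs
begin

definition Sub :: "nat \<Rightarrow> nat \<Rightarrow> nat set set" where
  "Sub F m = {A. A \<subseteq> {..<F} \<and> card A = m}"

definition emb :: "nat \<Rightarrow> nat \<Rightarrow> (nat \<times> nat \<Rightarrow> nat set) \<Rightarrow> nat \<Rightarrow> nat \<Rightarrow> nat set" where
  "emb K N g = (\<lambda>j n. if j < K \<and> n < N then g (j, n) else {})"

lemma finite_Sub: "finite (Sub F m)"
  unfolding Sub_def by (rule finite_subset[of _ "Pow {..<F}"]) auto

lemma Omega_image:
  "old_placement_configs K N F m = emb K N ` PiE ({..<K} \<times> {..<N}) (\<lambda>_. Sub F m)"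
proof (intro equalityI subsetI)
  fix C assume C: "C \<in> old_placement_configs K N F m"
  let ?g = "\<lambda>i. if i \<in> {..<K} \<times> {..<N} then C (fst i) (snd i) else undefined"
  have "C = emb K N ?g"
    using C by (auto simp: emb_def old_placement_configs_def fun_eq_iff)
  moreover have "?g \<in> PiE ({..<K} \<times> {..<N}) (\<lambda>_. Sub F m)"
    using C unfolding old_placement_configs_def Sub_def PiE_def extensional_def by force
  ultimately show "C \<in> emb K N ` PiE ({..<K} \<times> {..<N}) (\<lambda>_. Sub F m)" by blast
next
  fix C assume "C \<in> emb K N ` PiE ({..<K} \<times> {..<N}) (\<lambda>_. Sub F m)"
  then obtain g where g: "g \<in> PiE ({..<K} \<times> {..<N}) (\<lambda>_. Sub F m)" "C = emb K N g" by blast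
  then show "C \<in> old_placement_configs K N F m"
    by (auto simp: old_placement_configs_def emb_def Sub_def PiE_def Pi_def)
qed

lemma inj_emb: "inj_on (emb K N) (PiE ({..<K} \<times> {..<N}) (\<lambda>_. Sub F m))"
proof (rule inj_onI)
  fix g h assume g: "g \<in> PiE ({..<K} \<times> {..<N}) (\<lambda>_. Sub F m)"
    and h: "h \<in> PiE ({..<K} \<times> {..<N}) (\<lambda>_. Sub F m)" and e: "emb K N g = emb K N h"
  show "g = h"
  proof (rule PiE_ext[OF g h])
    fix i assume "i \<in> {..<K} \<times> {..<N}"
    then show "g i = h i" using fun_cong[OF fun_cong[OF e, of "fst i"], of "snd i"]
      by (cases i) (auto simp: emb_def)
  qed
qed

lemma sum_prod_Omega:
  fixes h :: "nat \<Rightarrow> nat \<Rightarrow> nat set \<Rightarrow> real"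
  shows "(\<Sum>C\<in>old_placement_configs K N F m. \<Prod>j<K. \<Prod>n<N. h j n (C j n))
       = (\<Prod>j<K. \<Prod>n<N. \<Sum>A\<in>Sub F m. h j n A)"
proof -
  let ?I = "{..<K} \<times> {..<N}"
  have "(\<Prod>j<K. \<Prod>n<N. \<Sum>A\<in>Sub F m. h j n A) = (\<Prod>i\<in>?I. \<Sum>A\<in>Sub F m. h (fst i) (snd i) A)"
    by (simp add: prod.cartesian_product split_def)
  also have "\<dots> = (\<Sum>g\<in>PiE ?I (\<lambda>_. Sub F m). \<Prod>i\<in>?I. h (fst i) (snd i) (g i))"
    by (rule prod_sum_PiE) (auto simp: finite_Sub)
  also have "\<dots> = (\<Sum>g\<in>PiE ?I (\<lambda>_. Sub F m). \<Prod>j<K. \<Prod>n<N. h j n (emb K N g j n))"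
  proof (intro sum.cong refl)
    fix g :: "nat \<times> nat \<Rightarrow> nat set"
    have "(\<Prod>j<K. \<Prod>n<N. h j n (emb K N g j n)) = (\<Prod>j<K. \<Prod>n<N. h j n (g (j,n)))"
      by (intro prod.cong refl) (simp add: emb_def)
    also have "\<dots> = (\<Prod>i\<in>?I. h (fst i) (snd i) (g i))"
      by (simp add: prod.cartesian_product split_def)
    finally show "(\<Prod>i\<in>?I. h (fst i) (snd i) (g i)) = (\<Prod>j<K. \<Prod>n<N. h j n (emb K N g j n))" by simp
  qed
  also have "\<dots> = (\<Sum>C\<in>old_placement_configs K N F m. \<Prod>j<K. \<Prod>n<N. h j n (C j n))"
    unfolding Omega_image by (rule sum.reindex[OF inj_emb, symmetric, unfolded comp_def])
  finally show ?thesis by simp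
qed

lemma card_Sub: "card (Sub F m) = F choose m"
  unfolding Sub_def by (simp add: n_subsets)

lemma card_Sub_mem:
  assumes f: "f < F"
  shows "card {A \<in> Sub F m. f \<in> A} * F = m * card (Sub F m)"
proof (cases m)
  case 0
  have "{A \<in> Sub F m. f \<in> A} = {}"
  proof -
    have "A = {}" if "A \<in> Sub F m" for A
    proof -
      have "finite A" using that by (auto simp: Sub_def intro: finite_subset[of _ "{..<F}"])
      then show ?thesis using that 0 by (simp add: Sub_def)
    qed
    then show ?thesis by auto
  qed
  then have "card {A \<in> Sub F m. f \<in> A} = 0" by (simp only: card.empty)
  then show ?thesis using 0 by simp
next
  case (Suc m')
  obtain F' where F': "F = Suc F'" using f by (cases F) auto
  have eq: "{A \<in> Sub F m. f \<in> A} = insert f ` {B. B \<subseteq> {..<F} - {f} \<and> card B = m'}"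
  proof (intro equalityI subsetI)
    fix A assume A: "A \<in> {A \<in> Sub F m. f \<in> A}"
    then have fin: "finite A" by (auto simp: Sub_def intro: finite_subset[of _ "{..<F}"])
    have "A = insert f (A - {f})" using A by auto
    moreover have "A - {f} \<in> {B. B \<subseteq> {..<F} - {f} \<and> card B = m'}"
      using A fin Suc by (auto simp: Sub_def)
    ultimately show "A \<in> insert f ` {B. B \<subseteq> {..<F} - {f} \<and> card B = m'}" by blast
  next
    fix A assume "A \<in> insert f ` {B. B \<subseteq> {..<F} - {f} \<and> card B = m'}"
    then obtain B where B: "B \<subseteq> {..<F} - {f}" "card B = m'" "A = insert f B" by blast
    have "finite B" using B(1) by (rule finite_subset) auto
    moreover have "f \<notin> B" using B(1) by blast
    ultimately show "A \<in> {A \<in> Sub F m. f \<in> A}" using B f Suc by (auto simp: Sub_def)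
  qed
  have inj: "inj_on (insert f) {B. B \<subseteq> {..<F} - {f} \<and> card B = m'}"
    by (rule inj_onI) auto
  have "card {A \<in> Sub F m. f \<in> A} = F' choose m'"
    unfolding eq card_image[OF inj] using f F' by (simp add: n_subsets)
  then show ?thesis unfolding card_Sub F' Suc
    using Suc_times_binomial_eq[of F' m'] by (metis mult.commute)
qed

definition pr :: "real \<Rightarrow> bool \<Rightarrow> real" where
  "pr q b = (if b then q else 1 - q)"

lemma sum_Sub_ind:
  assumes f: "f < F" and mF: "m \<le> F"
  shows "(\<Sum>A\<in>Sub F m. (if (f \<in> A) = b then 1 else 0 :: real))
      = real (card (Sub F m)) * pr (real m / real F) b"
proof -
  have F0: "real F > 0" using f by simp
  have c1: "real (card {A \<in> Sub F m. f \<in> A}) = real m * real (card (Sub F m)) / real F"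
    using card_Sub_mem[OF f, of m] F0 by (simp add: field_simps flip: of_nat_mult)
  have split: "card (Sub F m) = card {A \<in> Sub F m. f \<in> A} + card {A \<in> Sub F m. f \<notin> A}"
    by (subst card_Un_disjoint[symmetric]) (auto simp: finite_Sub intro: arg_cong[where f=card])
  have "(\<Sum>A\<in>Sub F m. (if (f \<in> A) = b then 1 else 0 :: real)) = real (card {A \<in> Sub F m. (f \<in> A) = b})"
    by (simp add: sum.If_cases finite_Sub Int_def conj_commute)
  also have "\<dots> = real (card (Sub F m)) * pr (real m / real F) b"
  proof (cases b)
    case True then show ?thesis using c1 by (simp add: pr_def)
  next
    case False
    have "real (card {A \<in> Sub F m. f \<notin> A}) = real (card (Sub F m)) - real (card {A \<in> Sub F m. f \<in> A})"
      using split by simp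
    then show ?thesis using False c1 F0 by (simp add: pr_def field_simps)
  qed
  finally show ?thesis .
qed

definition ind :: "(nat \<Rightarrow> nat \<Rightarrow> nat set) \<Rightarrow> nat \<Rightarrow> nat \<Rightarrow> nat \<Rightarrow> nat set \<Rightarrow> real" where
  "ind C K n f T = (\<Prod>j<K. if (f \<in> C j n) = (j \<in> T) then 1 else 0)"

lemma ind_eq:
  assumes "T \<subseteq> {..<K}"
  shows "ind C K n f T = (if users_storing C K n f = T then 1 else 0)"
proof (cases "users_storing C K n f = T")
  case True
  have "\<forall>j<K. (f \<in> C j n) = (j \<in> T)" using True assms unfolding users_storing_def by auto
  then show ?thesis unfolding ind_def using True by simp
next
  case False
  then obtain j where j: "j < K" "(f \<in> C j n) \<noteq> (j \<in> T)"
    using assms unfolding users_storing_def by auto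
  then have "(\<Prod>j<K. if (f \<in> C j n) = (j \<in> T) then 1 else 0::real) = 0"
    by (intro prod_zero) auto
  then show ?thesis using False unfolding ind_def by simp
qed

lemma card_Omega:
  "real (card (old_placement_configs K N F m)) = real (card (Sub F m)) ^ (K * N)"
proof -
  have "real (card (old_placement_configs K N F m)) =
        (\<Sum>C\<in>old_placement_configs K N F m. \<Prod>j<K. \<Prod>n<N. (\<lambda>j n A. 1::real) j n (C j n))"
    by simp
  also have "\<dots> = (\<Prod>j<K. \<Prod>n<N. \<Sum>A\<in>Sub F m. (1::real))"
    by (rule sum_prod_Omega)
  also have "\<dots> = real (card (Sub F m)) ^ (K * N)"
    by (simp add: power_mult[symmetric] mult.commute)
  finally show ?thesis .
qed

lemma pair_prob:
  assumes "n1 \<noteq> n2" "n1 < N" "n2 < N" "f < F" "g < F" "m \<le> F"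
  shows "(\<Sum>C\<in>old_placement_configs K N F m. ind C K n1 f T1 * ind C K n2 g T2)
    = real (card (Sub F m)) ^ (K * N) *
      (\<Prod>j<K. pr (real m / real F) (j \<in> T1) * pr (real m / real F) (j \<in> T2))"
proof -
  define q where "q = real m / real F"
  define cs where "cs = real (card (Sub F m))"
  define h where "h = (\<lambda>j n A. (if n = n1 then (if (f \<in> A) = (j \<in> T1) then 1 else 0) else 1) *
                         (if n = n2 then (if (g \<in> A) = (j \<in> T2) then 1 else 0) else 1) :: real)"
  have L: "ind C K n1 f T1 * ind C K n2 g T2 = (\<Prod>j<K. \<Prod>n<N. h j n (C j n))" for C
  proof -
    have "(\<Prod>n<N. h j n (C j n)) = (if (f \<in> C j n1) = (j \<in> T1) then 1 else 0) *
             (if (g \<in> C j n2) = (j \<in> T2) then 1 else 0)" for j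
      unfolding h_def prod.distrib using assms(2,3) by simp
    then show ?thesis unfolding ind_def by (simp add: prod.distrib)
  qed
  have R: "(\<Sum>A\<in>Sub F m. h j n A) = cs * (if n = n1 then pr q (j \<in> T1) else 1)
              * (if n = n2 then pr q (j \<in> T2) else 1)" for j n
    using sum_Sub_ind[OF assms(4,6)] sum_Sub_ind[OF assms(5,6)] assms(1)
    unfolding h_def cs_def q_def by (auto simp: card_Sub)
  have "(\<Sum>C\<in>old_placement_configs K N F m. ind C K n1 f T1 * ind C K n2 g T2)
      = (\<Prod>j<K. \<Prod>n<N. \<Sum>A\<in>Sub F m. h j n A)"
    unfolding L by (rule sum_prod_Omega)
  also have "\<dots> = (\<Prod>j<K. cs ^ N * (pr q (j \<in> T1) * pr q (j \<in> T2)))"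
    unfolding R prod.distrib using assms(2,3) by simp
  also have "\<dots> = cs ^ (K * N) * (\<Prod>j<K. pr q (j \<in> T1) * pr q (j \<in> T2))"
    by (simp add: prod.distrib power_mult[symmetric] mult.commute)
  finally show ?thesis unfolding cs_def q_def .
qed

lemma max_bound:
  fixes a :: "nat \<Rightarrow> nat"
  assumes fin: "finite S" and ne: "S \<noteq> {}"
  shows "real (Max (a ` S)) \<ge> (\<Sum>k\<in>S. real (a k))
          - 1/2 * (\<Sum>k\<in>S. \<Sum>l\<in>S - {k}. real (a k) * real (a l))"
proof -
  have "Max (a ` S) \<in> a ` S" using fin ne by simp
  then obtain k0 where k0: "k0 \<in> S" "a k0 = Max (a ` S)" by (metis imageE)
  define M where "M = a k0"
  have le: "a l \<le> M" if "l \<in> S" for l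
    using that fin k0 unfolding M_def by simp
  define X where "X = (\<Sum>l\<in>S - {k0}. real M * real (a l))"
  have s1: "(\<Sum>l\<in>S - {k0}. real (a l)) \<le> X"
    unfolding X_def
  proof (rule sum_mono)
    fix l assume l: "l \<in> S - {k0}"
    show "real (a l) \<le> real M * real (a l)"
    proof (cases "M = 0")
      case True then show ?thesis using le[of l] l by simp
    next
      case False then have "real M \<ge> 1" by simp
      then show ?thesis by (simp add: mult_le_cancel_right1)
    qed
  qed
  define P where "P = (\<Sum>k\<in>S. \<Sum>l\<in>S - {k}. real (a k) * real (a l))"
  have "P = (\<Sum>l\<in>S - {k0}. real (a k0) * real (a l)) + (\<Sum>k\<in>S - {k0}. \<Sum>l\<in>S - {k}. real (a k) * real (a l))"
    unfolding P_def using fin k0 by (simp add: sum.remove)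
  moreover have "(\<Sum>k\<in>S - {k0}. \<Sum>l\<in>S - {k}. real (a k) * real (a l)) \<ge> (\<Sum>k\<in>S - {k0}. real (a k) * real (a k0))"
  proof (rule sum_mono)
    fix k assume k: "k \<in> S - {k0}"
    have "(\<Sum>l\<in>S - {k}. real (a k) * real (a l)) = real (a k) * real (a k0) + (\<Sum>l\<in>S - {k} - {k0}. real (a k) * real (a l))"
      using k k0 fin by (subst sum.remove[of _ k0]) auto
    moreover have "(\<Sum>l\<in>S - {k} - {k0}. real (a k) * real (a l)) \<ge> 0" by (intro sum_nonneg) simp
    ultimately show "(\<Sum>l\<in>S - {k}. real (a k) * real (a l)) \<ge> real (a k) * real (a k0)" by linarith
  qed
  ultimately have "P \<ge> 2 * X" unfolding X_def M_def by (simp add: mult.commute)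
  moreover have "(\<Sum>k\<in>S. real (a k)) = real M + (\<Sum>l\<in>S - {k0}. real (a l))"
    unfolding M_def using fin k0 by (simp add: sum.remove)
  ultimately show ?thesis using s1 k0 unfolding P_def M_def by linarith
qed

definition SS :: "nat \<Rightarrow> nat set set" where
  "SS K = {S. S \<subseteq> {..<K} \<and> S \<noteq> {}}"

lemma finite_SS: "finite (SS K)"
  unfolding SS_def by (rule finite_subset[of _ "Pow {..<K}"]) auto

lemma card_Vset:
  "real (card (Vset C K F d k T)) = (\<Sum>f<F. if users_storing C K (d k) f = T then 1 else 0)"
  unfolding Vset_def by (simp add: sum.If_cases Int_def)

lemma total_uncached:
  assumes C: "C \<in> old_placement_configs K N F m" and d: "\<forall>k<K. d k < N"
  shows "(\<Sum>S\<in>SS K. \<Sum>k\<in>S. real (card (Vset C K F d k (S - {k})))) = real K * (real F - real m)"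
proof -
  have "(\<Sum>S\<in>SS K. \<Sum>k\<in>S. real (card (Vset C K F d k (S - {k}))))
      = (\<Sum>S\<in>SS K. \<Sum>k<K. \<Sum>f<F. if k \<in> S \<and> users_storing C K (d k) f = S - {k} then 1 else 0)"
  proof (rule sum.cong[OF refl])
    fix S assume S: "S \<in> SS K"
    have "(\<Sum>k\<in>S. real (card (Vset C K F d k (S - {k})))) = (\<Sum>k<K. if k \<in> S then real (card (Vset C K F d k (S - {k}))) else 0)"
      using S by (simp add: sum.If_cases SS_def Int_absorb1)
    also have "\<dots> = (\<Sum>k<K. \<Sum>f<F. if k \<in> S \<and> users_storing C K (d k) f = S - {k} then 1 else 0)"
      by (intro sum.cong refl) (auto simp: card_Vset)
    finally show "(\<Sum>k\<in>S. real (card (Vset C K F d k (S - {k})))) = (\<Sum>k<K. \<Sum>f<F. if k \<in> S \<and> users_storing C K (d k) f = S - {k} then 1 else 0)" .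
  qed
  also have "\<dots> = (\<Sum>k<K. \<Sum>f<F. \<Sum>S\<in>SS K. if k \<in> S \<and> users_storing C K (d k) f = S - {k} then 1 else 0)"
    by (subst sum.swap) (simp add: sum.swap[of _ "SS K"])
  also have "\<dots> = (\<Sum>k<K. \<Sum>f<F. if f \<in> C k (d k) then 0 else 1)"
  proof (intro sum.cong refl)
    fix k f assume k: "k \<in> {..<K}"
    let ?U = "users_storing C K (d k) f"
    have kU: "(k \<in> ?U) = (f \<in> C k (d k))" using k by (simp add: users_storing_def)
    have Usub: "?U \<subseteq> {..<K}" by (auto simp: users_storing_def)
    have "{S \<in> SS K. k \<in> S \<and> ?U = S - {k}} = (if f \<in> C k (d k) then {} else {insert k ?U})"
      using kU Usub k by (auto simp: SS_def)
    then show "(\<Sum>S\<in>SS K. if k \<in> S \<and> ?U = S - {k} then 1 else 0) = (if f \<in> C k (d k) then 0 else (1::real))"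
      using finite_SS[of K] by (simp add: sum.If_cases Int_def)
  qed
  also have "\<dots> = (\<Sum>k<K. real F - real m)"
  proof (intro sum.cong refl)
    fix k assume k: "k \<in> {..<K}"
    have Ck: "C k (d k) \<subseteq> {..<F}" "card (C k (d k)) = m"
      using C k d unfolding old_placement_configs_def by auto
    have "(\<Sum>f<F. if f \<in> C k (d k) then 0 else 1::real) = real (card ({..<F} - C k (d k)))"
      by (simp add: sum.If_cases Diff_eq Int_commute)
    also have "\<dots> = real F - real m"
    proof -
      have "m \<le> F" using Ck card_mono[OF finite_lessThan Ck(1)] by simp
      then show ?thesis using Ck by (simp add: card_Diff_subset finite_subset of_nat_diff)
    qed
    finally show "(\<Sum>f<F. if f \<in> C k (d k) then 0 else 1::real) = real F - real m" .
  qed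
  finally show ?thesis by simp
qed

lemma sum_Pow_prod:
  fixes x y :: "nat \<Rightarrow> real"
  assumes "finite A"
  shows "(\<Sum>S\<in>Pow A. \<Prod>j\<in>A. if j \<in> S then x j else y j) = (\<Prod>j\<in>A. x j + y j)"
proof -
  have "(\<Prod>j\<in>A. x j + y j) = (\<Sum>X\<in>Pow A. (\<Prod>j\<in>X. x j) * (\<Prod>j\<in>A - X. y j))"
    by (rule prod_add[OF assms])
  also have "\<dots> = (\<Sum>S\<in>Pow A. \<Prod>j\<in>A. if j \<in> S then x j else y j)"
  proof (rule sum.cong[OF refl])
    fix X assume "X \<in> Pow A"
    then have "A \<inter> X = X" "A \<inter> - X = A - X" by auto
    then show "(\<Prod>j\<in>X. x j) * (\<Prod>j\<in>A - X. y j) = (\<Prod>j\<in>A. if j \<in> X then x j else y j)"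
      using assms by (simp add: prod.If_cases)
  qed
  finally show ?thesis by simp
qed

lemma comb_sum:
  fixes q :: real
  shows "(\<Sum>S\<in>SS K. \<Sum>k\<in>S. \<Sum>l\<in>S - {k}. \<Prod>j<K. pr q (j \<in> S - {k}) * pr q (j \<in> S - {l}))
     = real K * (real K - 1) * (q^2 * (1-q)^2 * (q^2 + (1-q)^2) ^ (K - 2))"
proof -
  define G where "G = (\<lambda>S k l. \<Prod>j<K. pr q (j \<in> S - {k}) * pr q (j \<in> S - {l}))"
  define c where "c = q^2 * (1-q)^2 * (q^2 + (1-q)^2) ^ (K - 2)"
  have "(\<Sum>S\<in>SS K. \<Sum>k\<in>S. \<Sum>l\<in>S - {k}. G S k l)
      = (\<Sum>S\<in>SS K. \<Sum>k<K. \<Sum>l<K. if k \<in> S \<and> l \<in> S \<and> l \<noteq> k then G S k l else 0)"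
  proof (rule sum.cong[OF refl])
    fix S assume S: "S \<in> SS K"
    then have Ssub: "S \<subseteq> {..<K}" by (simp add: SS_def)
    have "(\<Sum>k\<in>S. \<Sum>l\<in>S - {k}. G S k l) = (\<Sum>k<K. if k \<in> S then (\<Sum>l\<in>S - {k}. G S k l) else 0)"
      using Ssub by (simp add: sum.If_cases Int_absorb1)
    also have "\<dots> = (\<Sum>k<K. \<Sum>l<K. if k \<in> S \<and> l \<in> S \<and> l \<noteq> k then G S k l else 0)"
    proof (rule sum.cong[OF refl])
      fix k assume "k \<in> {..<K}"
      have "{..<K} \<inter> {l. l \<in> S \<and> l \<noteq> k} = S - {k}" using Ssub by auto
      then show "(if k \<in> S then (\<Sum>l\<in>S - {k}. G S k l) else 0) = (\<Sum>l<K. if k \<in> S \<and> l \<in> S \<and> l \<noteq> k then G S k l else 0)"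
        by (cases "k \<in> S") (simp_all add: sum.If_cases)
    qed
    finally show "(\<Sum>k\<in>S. \<Sum>l\<in>S - {k}. G S k l) = (\<Sum>k<K. \<Sum>l<K. if k \<in> S \<and> l \<in> S \<and> l \<noteq> k then G S k l else 0)" .
  qed
  also have "\<dots> = (\<Sum>k<K. \<Sum>l<K. \<Sum>S\<in>SS K. if k \<in> S \<and> l \<in> S \<and> l \<noteq> k then G S k l else 0)"
    by (subst sum.swap) (simp add: sum.swap[of _ "SS K"])
  also have "\<dots> = (\<Sum>k<K. \<Sum>l<K. if l \<noteq> k then c else 0)"
  proof (intro sum.cong refl)
    fix k l assume k: "k \<in> {..<K}" and l: "l \<in> {..<K}"
    show "(\<Sum>S\<in>SS K. if k \<in> S \<and> l \<in> S \<and> l \<noteq> k then G S k l else 0) = (if l \<noteq> k then c else 0)"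
    proof (cases "l = k")
      case True then show ?thesis by simp
    next
      case False
      define x where "x = (\<lambda>j. if j = k then (1-q)*q else if j = l then q*(1-q) else q^2)"
      define y where "y = (\<lambda>j. if j = k \<or> j = l then 0 else (1-q)^2)"
      have trm: "(if k \<in> S \<and> l \<in> S \<and> l \<noteq> k then G S k l else 0) = (\<Prod>j<K. if j \<in> S then x j else y j)" for S
      proof (cases "k \<in> S \<and> l \<in> S")
        case True
        have "G S k l = (\<Prod>j<K. if j \<in> S then x j else y j)"
          unfolding G_def using False True
          by (intro prod.cong refl) (auto simp: x_def y_def pr_def power2_eq_square)
        then show ?thesis using True False by simp
      next
        case nb: False
        have "(\<Prod>j<K. if j \<in> S then x j else y j) = 0"
        proof (cases "k \<in> S")
          case True
          then have "l \<notin> S" using nb by blast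
          then show ?thesis using l False by (intro prod_zero) (auto simp: y_def)
        next
          case False then show ?thesis using k by (intro prod_zero) (auto simp: y_def)
        qed
        moreover have "(if k \<in> S \<and> l \<in> S \<and> l \<noteq> k then G S k l else 0) = 0"
          using nb by (intro if_not_P) blast
        ultimately show ?thesis by linarith
      qed
      have "(\<Sum>S\<in>SS K. if k \<in> S \<and> l \<in> S \<and> l \<noteq> k then G S k l else 0)
          = (\<Sum>S\<in>Pow {..<K}. if k \<in> S \<and> l \<in> S \<and> l \<noteq> k then G S k l else 0)"
      proof -
        have "Pow {..<K} = insert {} (SS K)" "{} \<notin> SS K" by (auto simp: SS_def)
        then show ?thesis using finite_SS[of K] by simp
      qed
      also have "\<dots> = (\<Sum>S\<in>Pow {..<K}. \<Prod>j<K. if j \<in> S then x j else y j)"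
        by (simp only: trm)
      also have "\<dots> = (\<Prod>j<K. x j + y j)" by (rule sum_Pow_prod) simp
      also have "\<dots> = (x k + y k) * ((x l + y l) * (\<Prod>j\<in>{..<K} - {k} - {l}. x j + y j))"
        using k l False by (simp add: prod.remove[of _ k] prod.remove[of _ l])
      also have "(\<Prod>j\<in>{..<K} - {k} - {l}. x j + y j) = (q^2 + (1-q)^2) ^ (K - 2)"
      proof -
        have "(\<Prod>j\<in>{..<K} - {k} - {l}. x j + y j) = (\<Prod>j\<in>{..<K} - {k} - {l}. q^2 + (1-q)^2)"
          by (intro prod.cong refl) (auto simp: x_def y_def)
        moreover have "card ({..<K} - {k} - {l}) = K - 2" using k l False by simp
        ultimately show ?thesis by simp
      qed
      finally show ?thesis using False unfolding c_def x_def y_def by (simp add: power2_eq_square)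
    qed
  qed
  also have "\<dots> = real K * (real K - 1) * c"
  proof -
    have "(\<Sum>l<K. if l \<noteq> k then c else 0) = (real K - 1) * c" if "k < K" for k
    proof -
      have "{..<K} \<inter> {l. l \<noteq> k} = {..<K} - {k}" by auto
      then show ?thesis using that by (simp add: sum.If_cases of_nat_diff)
    qed
    then show ?thesis by simp
  qed
  finally show ?thesis unfolding G_def c_def .
qed

definition Coll :: "(nat \<Rightarrow> nat \<Rightarrow> nat set) \<Rightarrow> nat \<Rightarrow> nat \<Rightarrow> (nat \<Rightarrow> nat) \<Rightarrow> real" where
  "Coll C K F d = (\<Sum>S\<in>SS K. \<Sum>k\<in>S. \<Sum>l\<in>S - {k}.
      real (card (Vset C K F d k (S - {k}))) * real (card (Vset C K F d l (S - {l}))))"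

lemma card_Vset_ind:
  assumes "T \<subseteq> {..<K}"
  shows "real (card (Vset C K F d k T)) = (\<Sum>f<F. ind C K (d k) f T)"
  unfolding card_Vset using ind_eq[OF assms] by simp

lemma coll_sum:
  assumes d: "\<forall>k<K. d k < N" and inj: "inj_on d {..<K}" and mF: "m \<le> F"
  shows "(\<Sum>C\<in>old_placement_configs K N F m. Coll C K F d)
    = real (card (Sub F m)) ^ (K * N) * real F ^ 2 *
      (real K * (real K - 1) * ((real m / real F)^2 * (1 - real m / real F)^2 *
        ((real m / real F)^2 + (1 - real m / real F)^2) ^ (K - 2)))"
proof -
  define \<Omega> where "\<Omega> = old_placement_configs K N F m"
  define W where "W = real (card (Sub F m)) ^ (K * N)"
  define q where "q = real m / real F"
  have "(\<Sum>C\<in>\<Omega>. Coll C K F d) = (\<Sum>S\<in>SS K. \<Sum>k\<in>S. \<Sum>l\<in>S - {k}. \<Sum>C\<in>\<Omega>.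
      real (card (Vset C K F d k (S - {k}))) * real (card (Vset C K F d l (S - {l}))))"
    unfolding Coll_def
    by (subst sum.swap, rule sum.cong[OF refl], subst sum.swap, rule sum.cong[OF refl], subst sum.swap, rule refl)
  also have "\<dots> = (\<Sum>S\<in>SS K. \<Sum>k\<in>S. \<Sum>l\<in>S - {k}. W * real F ^ 2 *
        (\<Prod>j<K. pr q (j \<in> S - {k}) * pr q (j \<in> S - {l})))"
  proof (intro sum.cong refl)
    fix S k l assume S: "S \<in> SS K" and k: "k \<in> S" and l: "l \<in> S - {k}"
    have Ssub: "S \<subseteq> {..<K}" using S by (simp add: SS_def)
    have T1: "S - {k} \<subseteq> {..<K}" and T2: "S - {l} \<subseteq> {..<K}" using Ssub by auto
    have kl: "k < K" "l < K" "l \<noteq> k" using Ssub k l by auto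
    have dne: "d k \<noteq> d l" using inj kl by (metis inj_on_def lessThan_iff)
    have "(\<Sum>C\<in>\<Omega>. real (card (Vset C K F d k (S - {k}))) * real (card (Vset C K F d l (S - {l}))))
        = (\<Sum>C\<in>\<Omega>. \<Sum>f<F. \<Sum>g<F. ind C K (d k) f (S - {k}) * ind C K (d l) g (S - {l}))"
      unfolding card_Vset_ind[OF T1] card_Vset_ind[OF T2] by (simp add: sum_product)
    also have "\<dots> = (\<Sum>f<F. \<Sum>g<F. \<Sum>C\<in>\<Omega>. ind C K (d k) f (S - {k}) * ind C K (d l) g (S - {l}))"
      by (subst sum.swap, rule sum.cong[OF refl], subst sum.swap, rule refl)
    also have "\<dots> = (\<Sum>f<F. \<Sum>g<F. W * (\<Prod>j<K. pr q (j \<in> S - {k}) * pr q (j \<in> S - {l})))"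
      unfolding \<Omega>_def W_def q_def
      by (intro sum.cong refl pair_prob dne) (use d kl mF in auto)
    also have "\<dots> = W * real F ^ 2 * (\<Prod>j<K. pr q (j \<in> S - {k}) * pr q (j \<in> S - {l}))"
      by (simp add: power2_eq_square)
    finally show "(\<Sum>C\<in>\<Omega>. real (card (Vset C K F d k (S - {k}))) * real (card (Vset C K F d l (S - {l}))))
        = W * real F ^ 2 * (\<Prod>j<K. pr q (j \<in> S - {k}) * pr q (j \<in> S - {l}))" .
  qed
  also have "\<dots> = W * real F ^ 2 * (\<Sum>S\<in>SS K. \<Sum>k\<in>S. \<Sum>l\<in>S - {k}.
        (\<Prod>j<K. pr q (j \<in> S - {k}) * pr q (j \<in> S - {l})))"
    by (simp add: sum_distrib_left)
  also have "\<dots> = W * real F ^ 2 * (real K * (real K - 1) * (q^2 * (1-q)^2 * (q^2 + (1-q)^2) ^ (K - 2)))"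
    by (simp only: comb_sum)
  finally show ?thesis unfolding \<Omega>_def W_def q_def .
qed

lemma key_ineq:
  fixes q :: real and K :: nat and Fr :: real
  assumes q: "0 < q" "q < 1" and K: "K \<ge> 1" and F0: "0 \<le> Fr"
    and Fb: "Fr \<le> (1 - q) / (2 * real K * q) * exp (2 * (q * (1 - q)) * (real K - 1))"
  shows "Fr * (real K - 1) * (q^2 * (1-q)^2 * (q^2 + (1-q)^2) ^ (K - 2)) \<le> 1 - q"
proof (cases "K = 1")
  case True then show ?thesis using q by simp
next
  case False
  then have K2: "K \<ge> 2" using K by simp
  define p where "p = q * (1 - q)"
  have p0: "0 < p" using q by (simp add: p_def)
  have p4: "p \<le> 1/4"
  proof -
    have "0 \<le> (q - 1/2)^2" by simp
    then show ?thesis unfolding p_def by (simp add: power2_eq_square algebra_simps)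
  qed
  have B: "q^2 + (1-q)^2 = 1 + (-2*p)" unfolding p_def by (simp add: power2_eq_square algebra_simps)
  have B0: "0 \<le> 1 + (-2*p)" using p4 by simp
  have "(q^2 + (1-q)^2) ^ (K - 2) \<le> exp (-2*p) ^ (K - 2)"
    unfolding B by (intro power_mono exp_ge_add_one_self B0)
  also have "\<dots> = exp (-2*p*(real K - 2))"
    using K2 by (simp add: exp_of_nat_mult[symmetric] of_nat_diff mult.commute)
  finally have Bp: "(q^2 + (1-q)^2) ^ (K - 2) \<le> exp (-2*p*(real K - 2))" .
  have Kr: "real K \<ge> 2" using K2 by simp
  have c0: "0 \<le> (real K - 1) * (q^2 * (1-q)^2)" using Kr by simp
  have "Fr * (real K - 1) * (q^2 * (1-q)^2 * (q^2 + (1-q)^2) ^ (K - 2))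
      = Fr * ((real K - 1) * (q^2 * (1-q)^2)) * (q^2 + (1-q)^2) ^ (K - 2)" by (simp add: algebra_simps)
  also have "\<dots> \<le> ((1 - q) / (2 * real K * q) * exp (2 * p * (real K - 1))) * ((real K - 1) * (q^2 * (1-q)^2)) * exp (-2*p*(real K - 2))"
  proof -
    define X where "X = (1 - q) / (2 * real K * q) * exp (2 * p * (real K - 1))"
    have X0: "0 \<le> X" unfolding X_def using q Kr by simp
    have "Fr * ((real K - 1) * (q^2 * (1-q)^2)) \<le> X * ((real K - 1) * (q^2 * (1-q)^2))"
      using mult_right_mono[OF Fb c0] unfolding X_def p_def .
    moreover have "0 \<le> (q^2 + (1-q)^2) ^ (K - 2)" by simp
    ultimately show ?thesis unfolding X_def[symmetric]
      using mult_mono[OF _ Bp] X0 c0 by simp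
  qed
  also have "\<dots> = (1 - q) * (((real K - 1) / real K) * (p * (1 - q)) * exp (2 * p)) / 2"
  proof -
    have "exp (2 * p * (real K - 1)) * exp (-2*p*(real K - 2)) = exp (2 * p)"
      by (simp add: exp_add[symmetric] algebra_simps)
    then show ?thesis using q Kr unfolding p_def
      by (simp add: field_simps power2_eq_square)
  qed
  also have "\<dots> \<le> (1 - q) * (1 * (1/4) * 3) / 2"
  proof -
    have a: "(real K - 1) / real K \<le> 1" using Kr by simp
    have b: "p * (1 - q) \<le> 1/4" using p4 p0 q by (smt (verit) mult_le_cancel_left1)
    have "exp (2 * p) \<le> exp 1" using p4 by simp
    also have "exp 1 \<le> (3::real)" using exp_le by simp
    finally have c: "exp (2 * p) \<le> 3" .
    have "((real K - 1) / real K) * (p * (1 - q)) * exp (2 * p) \<le> 1 * (1/4) * 3"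
      using a b c Kr p0 q by (intro mult_mono) auto
    then show ?thesis using q by (intro divide_right_mono mult_left_mono) auto
  qed
  also have "\<dots> \<le> 1 - q" using q by simp
  finally show ?thesis .
qed

theorem theorem5:
  fixes K N F m :: nat and M :: real and d :: "nat \<Rightarrow> nat"
  assumes "N > K"
    and "F > 0"
    and "0 < M" and "M \<le> real N"
    and "real m = M * real F / real N"
    and "\<forall>k<K. d k < N"
    and "inj_on d {..<K}"
    and "real F \<le> (real N / M) / (2 * real K) * (1 - 1 / (real N / M)) *
           exp (2 * (real K * M / real N) * (1 - (real K * M / real N) / real K) * (1 - 1 / real K))"
  shows "measure_pmf.expectation (old_placement K N F m) (\<lambda>C. R_nd C K F d)
           \<ge> 1 / 2 * (1 - M / real N) * real K"
proof -
  note hN = assms(1) and hF = assms(2) and hM = assms(3,4) and hm = assms(5)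
    and hd = assms(6) and hinj = assms(7) and hb = assms(8)
  define q where "q = M / real N"
  have N0: "real N > 0" using hN by simp
  have F0: "real F > 0" using hF by simp
  have q0: "0 < q" "q \<le> 1" using hM N0 by (auto simp: q_def)
  have qm: "q = real m / real F" using hm F0 N0 by (simp add: q_def field_simps)
  have mF: "m \<le> F"
  proof -
    have "real m = q * real F" using qm F0 by simp
    also have "\<dots> \<le> 1 * real F" using q0 F0 by (intro mult_right_mono) auto
    finally have "real m \<le> real F" by simp
    then show ?thesis by simp
  qed
  have K0: "K \<noteq> 0"
  proof
    assume "K = 0" then show False using hb hF by simp
  qed
  then have Kr: "real K \<ge> 1" by simp
  have e1: "(real N / M) / (2 * real K) * (1 - 1 / (real N / M)) = (1 - q) / (2 * real K * q)"
    using hM N0 Kr unfolding q_def by (simp add: field_simps)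
  have e2: "2 * (real K * M / real N) * (1 - (real K * M / real N) / real K) * (1 - 1 / real K)
      = 2 * (q * (1 - q)) * (real K - 1)"
    using hM N0 Kr unfolding q_def by (simp add: field_simps)
  have Fb: "real F \<le> (1 - q) / (2 * real K * q) * exp (2 * (q * (1 - q)) * (real K - 1))"
    using hb unfolding e1 e2 .
  have q1: "q < 1"
  proof (rule ccontr)
    assume "\<not> q < 1" then have "q = 1" using q0 by simp
    then show False using Fb F0 by simp
  qed
  define \<Omega> where "\<Omega> = old_placement_configs K N F m"
  have finO: "finite \<Omega>"
    unfolding \<Omega>_def Omega_image by (intro finite_imageI finite_PiE) (auto simp: finite_Sub)
  have neO: "\<Omega> \<noteq> {}"
  proof -
    have "(\<lambda>j n. if j < K \<and> n < N then {..<m} else {}) \<in> \<Omega>"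
      using mF unfolding \<Omega>_def old_placement_configs_def by auto
    then show ?thesis by blast
  qed
  define W where "W = real (card \<Omega>)"
  have W0: "W > 0" using finO neO by (simp add: W_def card_gt_0_iff)
  have WW: "W = real (card (Sub F m)) ^ (K * N)" unfolding W_def \<Omega>_def by (rule card_Omega)
  define c where "c = q^2 * (1-q)^2 * (q^2 + (1-q)^2) ^ (K - 2)"
  have SSeq: "{S. S \<subseteq> {..<K} \<and> S \<noteq> {}} = SS K" by (simp add: SS_def)
  have pt: "real F * R_nd C K F d \<ge> real K * (real F - real m) - 1/2 * Coll C K F d" if C: "C \<in> \<Omega>" for C
  proof -
    have "real F * R_nd C K F d = (\<Sum>S\<in>SS K. real (Max ((\<lambda>k. card (Vset C K F d k (S - {k}))) ` S)))"
      unfolding R_nd_def SSeq sum_distrib_left using F0 by simp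
    also have "\<dots> \<ge> (\<Sum>S\<in>SS K. (\<Sum>k\<in>S. real (card (Vset C K F d k (S - {k}))))
          - 1/2 * (\<Sum>k\<in>S. \<Sum>l\<in>S - {k}. real (card (Vset C K F d k (S - {k}))) * real (card (Vset C K F d l (S - {l})))))"
    proof (rule sum_mono)
      fix S assume S: "S \<in> SS K"
      then have "finite S" "S \<noteq> {}" by (auto simp: SS_def intro: finite_subset[of _ "{..<K}"])
      then show "(\<Sum>k\<in>S. real (card (Vset C K F d k (S - {k}))))
          - 1/2 * (\<Sum>k\<in>S. \<Sum>l\<in>S - {k}. real (card (Vset C K F d k (S - {k}))) * real (card (Vset C K F d l (S - {l}))))
          \<le> real (Max ((\<lambda>k. card (Vset C K F d k (S - {k}))) ` S))"
        by (rule max_bound)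
    qed
    also have "(\<Sum>S\<in>SS K. (\<Sum>k\<in>S. real (card (Vset C K F d k (S - {k}))))
          - 1/2 * (\<Sum>k\<in>S. \<Sum>l\<in>S - {k}. real (card (Vset C K F d k (S - {k}))) * real (card (Vset C K F d l (S - {l})))))
        = real K * (real F - real m) - 1/2 * Coll C K F d"
      unfolding sum_subtractf Coll_def sum_distrib_left[symmetric]
      using total_uncached[OF C[unfolded \<Omega>_def] hd] by simp
    finally show ?thesis .
  qed
  have "real F * (\<Sum>C\<in>\<Omega>. R_nd C K F d) \<ge> (\<Sum>C\<in>\<Omega>. real K * (real F - real m) - 1/2 * Coll C K F d)"
    unfolding sum_distrib_left by (rule sum_mono) (rule pt)
  also have "(\<Sum>C\<in>\<Omega>. real K * (real F - real m) - 1/2 * Coll C K F d)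
      = W * real K * (real F - real m) - 1/2 * (W * real F ^ 2 * (real K * (real K - 1) * c))"
    unfolding sum_subtractf sum_distrib_left[symmetric] \<Omega>_def coll_sum[OF hd hinj mF]
    unfolding WW[symmetric] c_def qm W_def \<Omega>_def by (simp add: algebra_simps)
  finally have main: "real F * (\<Sum>C\<in>\<Omega>. R_nd C K F d) \<ge>
      W * real K * (real F - real m) - 1/2 * (W * real F ^ 2 * (real K * (real K - 1) * c))" .
  have E: "measure_pmf.expectation (old_placement K N F m) (\<lambda>C. R_nd C K F d) = (\<Sum>C\<in>\<Omega>. R_nd C K F d) / W"
    unfolding old_placement_def \<Omega>_def[symmetric] W_def
    by (rule integral_pmf_of_set[OF neO finO])
  have key: "real F * (real K - 1) * c \<le> 1 - q"
    unfolding c_def using key_ineq[OF q0(1) q1 _ _ Fb] Kr by simp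
  define Rs where "Rs = (\<Sum>C\<in>\<Omega>. R_nd C K F d)"
  define A where "A = real K * (real F - real m) - 1/2 * (real F ^ 2 * (real K * (real K - 1) * c))"
  have h1: "W * A \<le> real F * Rs" using main unfolding A_def Rs_def by (simp add: algebra_simps)
  have h2: "A / real F \<le> Rs / W"
  proof -
    have "A / real F = (W * A) / (real F * W)" using W0 by simp
    also have "\<dots> \<le> (real F * Rs) / (real F * W)"
      using h1 W0 F0 by (intro divide_right_mono) auto
    also have "\<dots> = Rs / W" using F0 by simp
    finally show ?thesis .
  qed
  have h3: "A / real F = real K * (1 - q) - 1/2 * real K * (real F * (real K - 1) * c)"
    unfolding A_def qm using F0 by (simp add: field_simps power2_eq_square)
  have h4: "1/2 * real K * (real F * (real K - 1) * c) \<le> 1/2 * real K * (1 - q)"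
    using key Kr by (intro mult_left_mono) auto
  define Y where "Y = 1/2 * real K * (real F * (real K - 1) * c)"
  define Z where "Z = real K * (1 - q)"
  have g3: "A / real F = Z - Y" using h3 unfolding Y_def Z_def .
  have g4: "Y \<le> Z / 2" using h4 unfolding Y_def Z_def by (simp add: algebra_simps)
  have g5: "1 / 2 * (1 - q) * real K = Z / 2" unfolding Z_def by simp
  have "1 / 2 * (1 - q) * real K \<le> Rs / W" unfolding g5 using h2 g3 g4 by linarith
  then show ?thesis unfolding E q_def Rs_def .
qed

end
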